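(* Let $G=(V,E)$ be a graph of goods and let $n\ge 1$ agents be given with utility functions on $G$. If all agents except at most one are of the same type, then an mms-allocation of the goods of $G$ to the $n$ agents exists.
   Context: A graph of goods is a finite connected graph $G=(V,E)$ whose vertices are goods. A utility function on $G$ assigns a non-negative real number to each good and is extended additively to sets: $u(X)=\sum_{v\in X}u(v)$. A $G$-bundle is a subset of $V$ that induces a connected subgraph of $G$ (the empty set is also allowed as a bundle). An $n$-split of $G$ is a sequence $P_1,\dots,P_n$ of pairwise disjoint $G$-bundles (possibly empty) whose union is $V$. The maximin share is $\mathrm{mms}^{(n)}(G,u)=\max_{P_1,\dots,P_n}\min_{i} u(P_i)$, the maximum taken over all $n$-splits of $G$. Given agents $1,\dots,n$ with utility functions $u_1,\dots,u_n$, an allocation is an $n$-split $P_1,\dots,P_n$ where $P_i$ is given to agent $i$; it is an mms-allocation if $u_i(P_i)\ge \mathrm{mms}^{(n)}(G,u_i)$ for all $i$ ($n$ being the number of agents). Two agents are of the same type if they have the same utility function. *)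

theory Defs
  imports Complex_Main
begin

definition is_bundle :: "'a set \<Rightarrow> ('a \<times> 'a) set \<Rightarrow> 'a set \<Rightarrow> bool" where
  "is_bundle V E X \<longleftrightarrow> X \<subseteq> V \<and>
     (\<forall>x\<in>X. \<forall>y\<in>X. (\<lambda>a b. (a, b) \<in> E \<and> a \<in> X \<and> b \<in> X)\<^sup>*\<^sup>* x y)"

definition graph_of_goods :: "'a set \<Rightarrow> ('a \<times> 'a) set \<Rightarrow> bool" where
  "graph_of_goods V E \<longleftrightarrow> finite V \<and> V \<noteq> {} \<and> E \<subseteq> V \<times> V \<and> sym E \<and> is_bundle V E V"

definition n_split :: "'a set \<Rightarrow> ('a \<times> 'a) set \<Rightarrow> nat \<Rightarrow> (nat \<Rightarrow> 'a set) \<Rightarrow> bool" where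
  "n_split V E n P \<longleftrightarrow> (\<forall>i<n. is_bundle V E (P i)) \<and>
     (\<forall>i<n. \<forall>j<n. i \<noteq> j \<longrightarrow> P i \<inter> P j = {}) \<and> (\<Union>i<n. P i) = V"

definition mms :: "'a set \<Rightarrow> ('a \<times> 'a) set \<Rightarrow> nat \<Rightarrow> ('a \<Rightarrow> real) \<Rightarrow> real" where
  "mms V E n u = Max {Min ((\<lambda>i. sum u (P i)) ` {..<n}) | P. n_split V E n P}"

definition mms_allocation ::
  "'a set \<Rightarrow> ('a \<times> 'a) set \<Rightarrow> nat \<Rightarrow> (nat \<Rightarrow> 'a \<Rightarrow> real) \<Rightarrow> (nat \<Rightarrow> 'a set) \<Rightarrow> bool" where
  "mms_allocation V E n u P \<longleftrightarrow> n_split V E n P \<and>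
     (\<forall>i<n. sum (u i) (P i) \<ge> mms V E n (u i))"

end

theory Submission
  imports Defs "HOL-Library.FuncSet"
begin

lemma bundle_empty: "is_bundle V E {}"
  by (simp add: is_bundle_def)

lemma split_sub: "n_split V E n P \<Longrightarrow> i < n \<Longrightarrow> P i \<subseteq> V"
  by (auto simp: n_split_def is_bundle_def)

lemma split_sum:
  assumes "n_split V E n P" "finite V"
  shows "(\<Sum>i<n. sum w (P i)) = sum w V"
proof -
  have "sum w (\<Union>i\<in>{..<n}. P i) = (\<Sum>i<n. sum w (P i))"
    apply (rule sum.UNION_disjoint)
    using assms split_sub[OF assms(1)] finite_subset by (auto simp: n_split_def)
  then show ?thesis using assms(1) by (simp add: n_split_def)
qed

definition mset_of :: "'a set \<Rightarrow> ('a \<times> 'a) set \<Rightarrow> nat \<Rightarrow> ('a \<Rightarrow> real) \<Rightarrow> real set" where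
  "mset_of V E n w = {Min ((\<lambda>i. sum w (P i)) ` {..<n}) | P. n_split V E n P}"

lemma mms_alt: "mms V E n w = Max (mset_of V E n w)"
  by (simp add: mms_def mset_of_def)

lemma mset_finite:
  assumes "finite V"
  shows "finite (mset_of V E n w)"
proof -
  have "mset_of V E n w \<subseteq> (\<lambda>Q. Min ((\<lambda>i. sum w (Q i)) ` {..<n})) ` ({..<n} \<rightarrow>\<^sub>E Pow V)"
  proof
    fix x assume "x \<in> mset_of V E n w"
    then obtain P where P: "n_split V E n P" "x = Min ((\<lambda>i. sum w (P i)) ` {..<n})"
      by (auto simp: mset_of_def)
    have "restrict P {..<n} \<in> {..<n} \<rightarrow>\<^sub>E Pow V" using split_sub[OF P(1)] by auto
    moreover have "x = Min ((\<lambda>i. sum w (restrict P {..<n} i)) ` {..<n})"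
      using P(2) by (metis (no_types, lifting) image_cong restrict_apply')
    ultimately show "x \<in> (\<lambda>Q. Min ((\<lambda>i. sum w (Q i)) ` {..<n})) ` ({..<n} \<rightarrow>\<^sub>E Pow V)"
      by blast
  qed
  moreover have "finite ({..<n} \<rightarrow>\<^sub>E Pow V)" using assms by (simp add: finite_PiE)
  ultimately show ?thesis using finite_subset by blast
qed

lemma mset_nonempty:
  assumes "graph_of_goods V E" "n \<ge> 1"
  shows "mset_of V E n w \<noteq> {}"
proof -
  let ?P = "\<lambda>i::nat. if i = 0 then V else {}"
  have "n_split V E n ?P"
    using assms bundle_empty[of V E] unfolding n_split_def graph_of_goods_def
    apply (intro conjI)
      apply auto[2]
    apply (rule set_eqI) apply auto
    done
  then show ?thesis by (auto simp: mset_of_def)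
qed

lemma mms_attained:
  assumes "graph_of_goods V E" "n \<ge> 1"
  shows "\<exists>P. n_split V E n P \<and> (\<forall>i<n. sum w (P i) \<ge> mms V E n w)"
proof -
  have f: "finite V" using assms by (simp add: graph_of_goods_def)
  have "mms V E n w \<in> mset_of V E n w"
    unfolding mms_alt using mset_finite[OF f] mset_nonempty[OF assms] by (rule Max_in)
  then obtain P where P: "n_split V E n P" "mms V E n w = Min ((\<lambda>i. sum w (P i)) ` {..<n})"
    by (auto simp: mset_of_def)
  have "\<forall>i<n. sum w (P i) \<ge> mms V E n w" using P(2) by auto
  with P show ?thesis by blast
qed

lemma min_le_avg:
  assumes "n_split V E n P" "finite V" "n \<ge> 1"
  shows "Min ((\<lambda>i. sum w (P i)) ` {..<n}) \<le> sum w V / n"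
proof -
  let ?m = "Min ((\<lambda>i. sum w (P i)) ` {..<n})"
  have "\<forall>i<n. ?m \<le> sum w (P i)" by auto
  then have "(\<Sum>i<n. ?m) \<le> (\<Sum>i<n. sum w (P i))" by (intro sum_mono) auto
  then have "n * ?m \<le> sum w V" using split_sum[OF assms(1,2), of w] by simp
  then show ?thesis using assms(3) by (simp add: field_simps)
qed

lemma mms_le_avg:
  assumes "graph_of_goods V E" "n \<ge> 1"
  shows "mms V E n w \<le> sum w V / n"
proof -
  have f: "finite V" using assms by (simp add: graph_of_goods_def)
  show ?thesis unfolding mms_alt
    apply (rule Max.boundedI[OF mset_finite[OF f] mset_nonempty[OF assms]])
    using min_le_avg[OF _ f assms(2)] by (auto simp: mset_of_def)
qed

lemma exists_big:
  assumes "n_split V E n P" "finite V" "n \<ge> 1"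
  shows "\<exists>k<n. sum w (P k) \<ge> sum w V / n"
proof (rule ccontr)
  assume "\<not> ?thesis"
  then have "\<forall>k<n. sum w (P k) < sum w V / n" by auto
  then have "(\<Sum>i<n. sum w (P i)) < (\<Sum>i<n. sum w V / n)"
    using assms(3) by (intro sum_strict_mono) (auto simp: lessThan_empty_iff)
  then show False using split_sum[OF assms(1,2), of w] assms(3) by simp
qed

lemma mms_cong:
  assumes "\<forall>v\<in>V. w v = w' v"
  shows "mms V E n w = mms V E n w'"
proof -
  have key: "Min ((\<lambda>i. sum w (P i)) ` {..<n}) = Min ((\<lambda>i. sum w' (P i)) ` {..<n})"
    if "n_split V E n P" for P
  proof -
    have "\<forall>i<n. sum w (P i) = sum w' (P i)"
      using split_sub[OF that] assms by (metis subsetD sum.cong)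
    then show ?thesis
      by (metis (no_types, lifting) image_cong lessThan_iff)
  qed
  have "mset_of V E n w = mset_of V E n w'"
    unfolding mset_of_def
    apply (rule Collect_cong)
    using key by metis
  then show ?thesis by (simp add: mms_alt)
qed

theorem proposition2p1:
  fixes V :: "'a set" and E :: "('a \<times> 'a) set" and n :: nat
    and u :: "nat \<Rightarrow> 'a \<Rightarrow> real"
  assumes "graph_of_goods V E"
    and "n \<ge> 1"
    and "\<forall>i<n. \<forall>v\<in>V. u i v \<ge> 0"
    and "\<exists>j<n. \<forall>i<n. \<forall>k<n. i \<noteq> j \<and> k \<noteq> j \<longrightarrow> (\<forall>v\<in>V. u i v = u k v)"
  shows "\<exists>P. mms_allocation V E n u P"
proof -
  have f: "finite V" using assms(1) by (simp add: graph_of_goods_def)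
  obtain j where j: "j < n" "\<forall>i<n. \<forall>k<n. i \<noteq> j \<and> k \<noteq> j \<longrightarrow> (\<forall>v\<in>V. u i v = u k v)"
    using assms(4) by blast
  define c where "c = (if n \<ge> 2 then (if j = 0 then 1 else 0) else j)"
  have cn: "c < n" using j(1) by (auto simp: c_def)
  have ceq: "\<forall>i<n. i \<noteq> j \<longrightarrow> (\<forall>v\<in>V. u i v = u c v)"
  proof (intro allI impI)
    fix i assume i: "i < n" "i \<noteq> j"
    then have "n \<ge> 2" using j(1) by linarith
    then have "c \<noteq> j" by (auto simp: c_def)
    then show "\<forall>v\<in>V. u i v = u c v" using j(2) i cn by blast
  qed
  obtain P where P: "n_split V E n P" "\<forall>i<n. sum (u c) (P i) \<ge> mms V E n (u c)"
    using mms_attained[OF assms(1,2)] by blast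
  obtain k where k: "k < n" "sum (u j) (P k) \<ge> sum (u j) V / n"
    using exists_big[OF P(1) f assms(2)] by blast
  define s where "s = (\<lambda>i::nat. if i = j then k else if i = k then j else i)"
  have sb: "bij_betw s {..<n} {..<n}" unfolding s_def
    using j(1) k(1) unfolding bij_betw_def inj_on_def by (auto simp: image_iff)
  define R where "R = P \<circ> s"
  have sn: "\<And>i. i < n \<Longrightarrow> s i < n" using sb bij_betwE by blast
  have Rs: "n_split V E n R"
    unfolding n_split_def R_def
  proof (intro conjI allI impI)
    fix i assume "i < n" then show "is_bundle V E ((P \<circ> s) i)"
      using P(1) sn by (auto simp: n_split_def)
  next
    fix i l assume "i < n" "l < n" "i \<noteq> l"
    moreover have "s i \<noteq> s l" using \<open>i \<noteq> l\<close> by (simp add: s_def)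
    ultimately show "(P \<circ> s) i \<inter> (P \<circ> s) l = {}" using P(1) sn by (auto simp: n_split_def)
  next
    have "(\<Union>i<n. (P \<circ> s) i) = (\<Union>i\<in>s ` {..<n}. P i)" by auto
    also have "s ` {..<n} = {..<n}" using sb by (simp add: bij_betw_def)
    finally show "(\<Union>i<n. (P \<circ> s) i) = V" using P(1) by (simp add: n_split_def)
  qed
  have "\<forall>i<n. sum (u i) (R i) \<ge> mms V E n (u i)"
  proof (intro allI impI)
    fix i assume i: "i < n"
    show "sum (u i) (R i) \<ge> mms V E n (u i)"
    proof (cases "i = j")
      case True
      then have "R i = P k" by (simp add: R_def s_def)
      then show ?thesis using k(2) mms_le_avg[OF assms(1,2), of "u j"] True by simp
    next
      case False
      have sub: "R i \<subseteq> V" using split_sub[OF Rs i] .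
      have "sum (u i) (R i) = sum (u c) (R i)"
        using ceq i False sub by (intro sum.cong) auto
      moreover have "sum (u c) (R i) \<ge> mms V E n (u c)"
        using P(2) sn i by (simp add: R_def)
      moreover have "mms V E n (u i) = mms V E n (u c)"
        using ceq i False by (intro mms_cong) auto
      ultimately show ?thesis by simp
    qed
  qed
  then show ?thesis using Rs unfolding mms_allocation_def by blast
qed

end
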